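(* Consider the closed-loop system $$\dot X(t)=f\big(X(t),u(0,t)\big),\quad u_t(x,t)=v\big(u(x,t)\big)u_x(x,t),\quad u(1,t)=\kappa\big(p(1,t)\big),$$ with $p(x,t)=X(t)+\int_0^x f(p(y,t),u(y,t))\Gamma(u(y,t),u_y(y,t),y)\,dy$, $\Gamma(u,u_x,x)=\frac{1}{v(u)}-\frac{x v'(u)u_x}{v(u)^2}$, under Assumptions (A1)–(A3) below, and let $M>0$ be fixed. Define $w(x,t)=u(x,t)-\kappa(p(x,t))$. There exists a class $\mathcal{KL}$ function $\beta_w$ such that for all solutions of the closed-loop system satisfying the feasibility condition $$-M<\frac{v'\big(u(x,t)\big)u_x(x,t)}{v\big(u(x,t)\big)}<1\quad\text{for all }x\in[0,1],\ t\ge0,$$ the following holds: $$\Omega_w(t)\le\beta_w\big(\Omega_w(0),t\big)\ \text{for all }t\ge0,\qquad \Omega_w(t)=|X(t)|+\|w(t)\|_\infty+\|w_x(t)\|_\infty.$$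
   Context: $X(t)\in\mathbb{R}^n$, $u(x,t)\in\mathbb{R}$, $x\in[0,1]$, $t\ge0$; $f:\mathbb{R}^n\times\mathbb{R}\to\mathbb{R}^n$ is continuously differentiable with $f(0,0)=0$. (A1) $v:\mathbb{R}\to\mathbb{R}_+$ is twice continuously differentiable and $v(u)\ge\underline v>0$ for all $u$. (A2) $\dot X=f(X,\omega)$ is strongly forward complete w.r.t. $\omega$: there exist smooth $R:\mathbb{R}^n\to\mathbb{R}_+$ and class $\mathcal{K}_\infty$ functions $\alpha_1,\alpha_2,\alpha_3$ with $\alpha_1(|X|)\le R(X)\le\alpha_2(|X|)$, $\frac{\partial R}{\partial X}f(X,\omega)\le R(X)+\alpha_3(|\omega|)$. (A3) $\kappa:\mathbb{R}^n\to\mathbb{R}$ is twice continuously differentiable, $\kappa(0)=0$, and $\dot X=f(X,\kappa(X)+\omega)$ is input-to-state stable w.r.t. $\omega$. Solutions are continuously differentiable functions $X$, $u$ satisfying the closed-loop equations. $\|w(t)\|_\infty=\max_{x\in[0,1]}|w(x,t)|$, similarly for $w_x$; $|\cdot|$ is the Euclidean norm. *)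

theory Defs
  imports "HOL-Analysis.Analysis"
begin

definition class_K :: "(real \<Rightarrow> real) \<Rightarrow> bool" where
  "class_K \<alpha> \<longleftrightarrow> continuous_on {0..} \<alpha> \<and> \<alpha> 0 = 0 \<and> strict_mono_on {0..} \<alpha>"

definition class_Kinf :: "(real \<Rightarrow> real) \<Rightarrow> bool" where
  "class_Kinf \<alpha> \<longleftrightarrow> class_K \<alpha> \<and> filterlim \<alpha> at_top at_top"

definition class_KL :: "(real \<Rightarrow> real \<Rightarrow> real) \<Rightarrow> bool" where
  "class_KL \<beta> \<longleftrightarrow>
     continuous_on ({0..} \<times> {0..}) (\<lambda>(s,t). \<beta> s t) \<and>
     (\<forall>t\<ge>0. class_K (\<lambda>s. \<beta> s t)) \<and>
     (\<forall>s\<ge>0. (\<forall>t1 t2. 0 \<le> t1 \<longrightarrow> t1 \<le> t2 \<longrightarrow> \<beta> s t2 \<le> \<beta> s t1) \<and>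
             ((\<lambda>t. \<beta> s t) \<longlongrightarrow> 0) at_top)"

definition C1_fun2 :: "('a::real_normed_vector \<Rightarrow> 'b::real_normed_vector \<Rightarrow> 'c::real_normed_vector) \<Rightarrow> bool" where
  "C1_fun2 g \<longleftrightarrow> (\<exists>D :: 'a \<times> 'b \<Rightarrow> ('a \<times> 'b) \<Rightarrow>\<^sub>L 'c.
      continuous_on UNIV D \<and> (\<forall>z. ((\<lambda>(a,b). g a b) has_derivative blinfun_apply (D z)) (at z)))"

definition C1_fun :: "('a::real_normed_vector \<Rightarrow> 'c::real_normed_vector) \<Rightarrow> bool" where
  "C1_fun g \<longleftrightarrow> (\<exists>D :: 'a \<Rightarrow> 'a \<Rightarrow>\<^sub>L 'c.
      continuous_on UNIV D \<and> (\<forall>z. (g has_derivative blinfun_apply (D z)) (at z)))"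

definition C2_fun :: "('a::real_normed_vector \<Rightarrow> 'c::real_normed_vector) \<Rightarrow> bool" where
  "C2_fun g \<longleftrightarrow> (\<exists>(D :: 'a \<Rightarrow> 'a \<Rightarrow>\<^sub>L 'c) (D2 :: 'a \<Rightarrow> 'a \<Rightarrow>\<^sub>L ('a \<Rightarrow>\<^sub>L 'c)).
      continuous_on UNIV D2 \<and> (\<forall>z. (g has_derivative blinfun_apply (D z)) (at z)) \<and>
      (\<forall>z. (D has_derivative blinfun_apply (D2 z)) (at z)))"

definition C2_real :: "(real \<Rightarrow> real) \<Rightarrow> bool" where
  "C2_real g \<longleftrightarrow> (\<forall>s. g differentiable at s) \<and> (\<forall>s. deriv g differentiable at s) \<and>
      continuous_on UNIV (deriv (deriv g))"

definition C1_on2 :: "(real \<Rightarrow> real \<Rightarrow> real) \<Rightarrow> (real \<times> real) set \<Rightarrow> bool" where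
  "C1_on2 u S \<longleftrightarrow> (\<exists>D :: real \<times> real \<Rightarrow> (real \<times> real) \<Rightarrow>\<^sub>L real.
      continuous_on S D \<and> (\<forall>z\<in>S. ((\<lambda>(x,t). u x t) has_derivative blinfun_apply (D z)) (at z within S)))"

definition px :: "(real \<Rightarrow> real \<Rightarrow> 'a::real_normed_vector) \<Rightarrow> real \<Rightarrow> real \<Rightarrow> 'a" where
  "px u x t = vector_derivative (\<lambda>y. u y t) (at x within {0..1})"

definition pt :: "(real \<Rightarrow> real \<Rightarrow> 'a::real_normed_vector) \<Rightarrow> real \<Rightarrow> real \<Rightarrow> 'a" where
  "pt u x t = vector_derivative (\<lambda>s. u x s) (at t within {0..})"

definition ISS :: "(real^'n \<Rightarrow> real \<Rightarrow> real^'n) \<Rightarrow> bool" where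
  "ISS F \<longleftrightarrow> (\<exists>\<beta> \<gamma>. class_KL \<beta> \<and> class_K \<gamma> \<and>
     (\<forall>(X :: real \<Rightarrow> real^'n) (\<omega> :: real \<Rightarrow> real).
        continuous_on {0..} \<omega> \<longrightarrow>
        (\<forall>t\<ge>0. (X has_vector_derivative F (X t) (\<omega> t)) (at t within {0..})) \<longrightarrow>
        (\<forall>t\<ge>0. norm (X t) \<le> \<beta> (norm (X 0)) t + \<gamma> (SUP s\<in>{0..t}. \<bar>\<omega> s\<bar>))))"

definition Gam :: "(real \<Rightarrow> real) \<Rightarrow> real \<Rightarrow> real \<Rightarrow> real \<Rightarrow> real" where
  "Gam v u ux x = 1 / v u - x * deriv v u * ux / (v u)^2"

definition closed_loop_sol ::
  "(real^'n \<Rightarrow> real \<Rightarrow> real^'n) \<Rightarrow> (real \<Rightarrow> real) \<Rightarrow> (real^'n \<Rightarrow> real) \<Rightarrow>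
   (real \<Rightarrow> real^'n) \<Rightarrow> (real \<Rightarrow> real \<Rightarrow> real) \<Rightarrow> (real \<Rightarrow> real \<Rightarrow> real^'n) \<Rightarrow> bool" where
  "closed_loop_sol f v \<kappa> X u p \<longleftrightarrow>
     (\<forall>t\<ge>0. (X has_vector_derivative f (X t) (u 0 t)) (at t within {0..})) \<and>
     C1_on2 u ({0..1} \<times> {0..}) \<and>
     (\<forall>x\<in>{0..1}. \<forall>t\<ge>0. pt u x t = v (u x t) * px u x t) \<and>
     (\<forall>t\<ge>0. u 1 t = \<kappa> (p 1 t)) \<and>
     (\<forall>t\<ge>0. continuous_on {0..1} (\<lambda>x. p x t) \<and>
        (\<forall>x\<in>{0..1}. p x t = X t + integral {0..x}
            (\<lambda>y. Gam v (u y t) (px u y t) y *\<^sub>R f (p y t) (u y t))))"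

definition feasible :: "real \<Rightarrow> (real \<Rightarrow> real) \<Rightarrow> (real \<Rightarrow> real \<Rightarrow> real) \<Rightarrow> bool" where
  "feasible M v u \<longleftrightarrow> (\<forall>x\<in>{0..1}. \<forall>t\<ge>0.
      - M < deriv v (u x t) * px u x t / v (u x t) \<and> deriv v (u x t) * px u x t / v (u x t) < 1)"

definition wfun :: "(real^'n \<Rightarrow> real) \<Rightarrow> (real \<Rightarrow> real \<Rightarrow> real) \<Rightarrow> (real \<Rightarrow> real \<Rightarrow> real^'n) \<Rightarrow> real \<Rightarrow> real \<Rightarrow> real" where
  "wfun \<kappa> u p x t = u x t - \<kappa> (p x t)"

definition Omega_w :: "(real^'n \<Rightarrow> real) \<Rightarrow> (real \<Rightarrow> real^'n) \<Rightarrow> (real \<Rightarrow> real \<Rightarrow> real) \<Rightarrow>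
    (real \<Rightarrow> real \<Rightarrow> real^'n) \<Rightarrow> real \<Rightarrow> real" where
  "Omega_w \<kappa> X u p t = norm (X t) + (SUP x\<in>{0..1}. \<bar>wfun \<kappa> u p x t\<bar>)
      + (SUP x\<in>{0..1}. \<bar>px (wfun \<kappa> u p) x t\<bar>)"

end

theory Submission
  imports Defs
begin


lemma gronwall_fwd:
  fixes \<phi> :: "real \<Rightarrow> 'a::real_inner"
  assumes ab: "a \<le> b"
    and der: "\<And>s. s\<in>{a..b} \<Longrightarrow> (\<phi> has_vector_derivative \<phi>' s) (at s within {a..b})"
    and bd: "\<And>s. s\<in>{a..b} \<Longrightarrow> norm (\<phi>' s) \<le> K * norm (\<phi> s)"
    and z: "\<phi> a = 0" and s: "s \<in> {a..b}"
  shows "\<phi> s = 0"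
proof -
  define g where "g s = inner (\<phi> s) (\<phi> s) * exp (-(2*K) * s)" for s
  define g' where "g' s = (\<lambda>h. h * (2 * inner (\<phi> s) (\<phi>' s) * exp (-(2*K) * s)
      + inner (\<phi> s) (\<phi> s) * (exp (-(2*K) * s) * (-(2*K)))))" for s
  have gd: "(g has_derivative g' x) (at x within {a..s})" if "a \<le> x" "x \<le> s" for x
  proof -
    have x: "x \<in> {a..b}" using that s by auto
    have d: "(\<phi> has_derivative (\<lambda>h. h *\<^sub>R \<phi>' x)) (at x within {a..s})"
      using has_vector_derivative_within_subset[OF der[OF x]] s
      unfolding has_vector_derivative_def by auto
    have e: "((\<lambda>s. exp (-(2*K) * s)) has_real_derivative (exp (-(2*K) * x) * (-(2*K)))) (at x within {a..s})"
      by (auto intro!: derivative_eq_intros)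
    show ?thesis unfolding g_def g'_def
      apply (rule has_derivative_eq_rhs)
       apply (rule has_derivative_mult[OF has_derivative_inner[OF d d] e[unfolded has_field_derivative_def]])
      apply (auto simp: fun_eq_iff algebra_simps inner_commute)
      done
  qed
  obtain x where x: "x \<in> {a..s}" and eq: "g s - g a = g' x (s - a)"
    using mvt_very_simple[of a s g g'] gd s by auto
  have xab: "x \<in> {a..b}" using x s by auto
  have "inner (\<phi> x) (\<phi>' x) \<le> norm (\<phi> x) * norm (\<phi>' x)"
    using Cauchy_Schwarz_ineq2 by (metis abs_le_iff)
  also have "\<dots> \<le> norm (\<phi> x) * (K * norm (\<phi> x))"
    using bd[OF xab] by (simp add: mult_left_mono)
  finally have "inner (\<phi> x) (\<phi>' x) \<le> K * inner (\<phi> x) (\<phi> x)"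
    by (simp add: power2_norm_eq_inner[symmetric] power2_eq_square algebra_simps)
  moreover have "g' x (s - a) = ((s - a) * (2 * exp (-(2*K) * x))) * (inner (\<phi> x) (\<phi>' x) - K * inner (\<phi> x) (\<phi> x))"
    unfolding g'_def by (simp add: algebra_simps)
  ultimately have "g' x (s - a) \<le> 0" using s
    by (metis diff_ge_0_iff_ge mult_nonneg_nonpos atLeastAtMost_iff exp_ge_zero mult_nonneg_nonneg zero_le_numeral diff_le_0_iff_le)
  then have "g s \<le> 0" using eq z unfolding g_def by simp
  then have "inner (\<phi> s) (\<phi> s) \<le> 0" unfolding g_def
    by (simp add: mult_le_0_iff)
  then show ?thesis by (metis inner_gt_zero_iff not_le)
qed

lemma gronwall_bwd:
  fixes \<phi> :: "real \<Rightarrow> 'a::real_inner"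
  assumes ab: "a \<le> b"
    and der: "\<And>s. s\<in>{a..b} \<Longrightarrow> (\<phi> has_vector_derivative \<phi>' s) (at s within {a..b})"
    and bd: "\<And>s. s\<in>{a..b} \<Longrightarrow> norm (\<phi>' s) \<le> K * norm (\<phi> s)"
    and z: "\<phi> b = 0" and s: "s \<in> {a..b}"
  shows "\<phi> s = 0"
proof -
  define g where "g s = inner (\<phi> s) (\<phi> s) * exp ((2*K) * s)" for s
  define g' where "g' s = (\<lambda>h. h * (2 * inner (\<phi> s) (\<phi>' s) * exp ((2*K) * s)
      + inner (\<phi> s) (\<phi> s) * (exp ((2*K) * s) * (2*K))))" for s
  have gd: "(g has_derivative g' x) (at x within {s..b})" if "s \<le> x" "x \<le> b" for x
  proof -
    have x: "x \<in> {a..b}" using that s by auto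
    have d: "(\<phi> has_derivative (\<lambda>h. h *\<^sub>R \<phi>' x)) (at x within {s..b})"
      using has_vector_derivative_within_subset[OF der[OF x]] s
      unfolding has_vector_derivative_def by auto
    have e: "((\<lambda>s. exp ((2*K) * s)) has_real_derivative (exp ((2*K) * x) * (2*K))) (at x within {s..b})"
      by (auto intro!: derivative_eq_intros)
    show ?thesis unfolding g_def g'_def
      apply (rule has_derivative_eq_rhs)
       apply (rule has_derivative_mult[OF has_derivative_inner[OF d d] e[unfolded has_field_derivative_def]])
      apply (auto simp: fun_eq_iff algebra_simps inner_commute)
      done
  qed
  obtain x where x: "x \<in> {s..b}" and eq: "g b - g s = g' x (b - s)"
    using mvt_very_simple[of s b g g'] gd s by auto
  have xab: "x \<in> {a..b}" using x s by auto
  have "- inner (\<phi> x) (\<phi>' x) \<le> norm (\<phi> x) * norm (\<phi>' x)"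
    using Cauchy_Schwarz_ineq2 by (metis abs_le_iff)
  also have "\<dots> \<le> norm (\<phi> x) * (K * norm (\<phi> x))"
    using bd[OF xab] by (simp add: mult_left_mono)
  finally have "- inner (\<phi> x) (\<phi>' x) \<le> K * inner (\<phi> x) (\<phi> x)"
    by (simp add: power2_norm_eq_inner[symmetric] power2_eq_square algebra_simps)
  moreover have "g' x (b - s) = ((b - s) * (2 * exp ((2*K) * x))) * (inner (\<phi> x) (\<phi>' x) + K * inner (\<phi> x) (\<phi> x))"
    unfolding g'_def by (simp add: algebra_simps)
  ultimately have "g' x (b - s) \<ge> 0" using s
    by (metis diff_ge_0_iff_ge atLeastAtMost_iff exp_ge_zero mult_nonneg_nonneg zero_le_numeral add.commute le_add_same_cancel1 neg_le_iff_le add_le_cancel_left diff_add_cancel minus_add_cancel le_diff_eq)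
  then have "g s \<le> 0" using eq z unfolding g_def by simp
  then have "inner (\<phi> s) (\<phi> s) \<le> 0" unfolding g_def
    by (simp add: mult_le_0_iff)
  then show ?thesis by (metis inner_gt_zero_iff not_le)
qed



lemma classK_mono: "class_K g \<Longrightarrow> 0 \<le> s \<Longrightarrow> s \<le> s' \<Longrightarrow> g s \<le> g s'"
  unfolding class_K_def by (rule strict_mono_on_leD[of "{0..}"]) auto

lemma classK_nonneg: "class_K g \<Longrightarrow> s \<ge> 0 \<Longrightarrow> g s \<ge> 0"
  using classK_mono[of g 0 s] unfolding class_K_def by simp

lemma KL_K: "class_KL \<beta> \<Longrightarrow> t \<ge> 0 \<Longrightarrow> class_K (\<lambda>s. \<beta> s t)"
  unfolding class_KL_def by blast

lemma KL_nonneg: "class_KL \<beta> \<Longrightarrow> s \<ge> 0 \<Longrightarrow> t \<ge> 0 \<Longrightarrow> \<beta> s t \<ge> 0"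
  using classK_nonneg[OF KL_K] by blast

lemma KL_dec: "class_KL \<beta> \<Longrightarrow> s \<ge> 0 \<Longrightarrow> 0 \<le> t1 \<Longrightarrow> t1 \<le> t2 \<Longrightarrow> \<beta> s t2 \<le> \<beta> s t1"
  unfolding class_KL_def by blast

lemma KL_construct:
  assumes b: "class_KL \<beta>" and g: "class_K \<gamma>" and T: "T > 0" and c: "c \<ge> 0"
  shows "class_KL (\<lambda>r t. \<beta> (\<beta> r 0 + \<gamma> r) (max (t - T) 0) + (\<beta> r 0 + \<gamma> r + c * r) * exp (T - t))"
proof -
  define B where "B r = \<beta> r 0 + \<gamma> r" for r
  have b0: "class_K (\<lambda>s. \<beta> s 0)" using KL_K[OF b] by simp
  have Bc: "continuous_on {0..} B" unfolding B_def
    using b0 g unfolding class_K_def by (intro continuous_on_add) auto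
  have Bsm: "strict_mono_on {0..} B" using b0 g unfolding class_K_def strict_mono_on_def B_def
    by (auto intro: add_strict_mono)
  have B0: "B 0 = 0" using b0 g unfolding class_K_def B_def by auto
  have Bnn: "B r \<ge> 0" if "r \<ge> 0" for r unfolding B_def
    using classK_nonneg[OF b0 that] classK_nonneg[OF g that] by simp
  have Bmono: "B r \<le> B r'" if "0 \<le> r" "r \<le> r'" for r r' unfolding B_def
    using classK_mono[OF b0 that] classK_mono[OF g that] by simp
  define C where "C r = B r + c * r" for r
  have Cc: "continuous_on {0..} C" unfolding C_def using Bc by (intro continuous_on_add continuous_on_mult continuous_on_const continuous_on_id)
  have Csm: "strict_mono_on {0..} C" using Bsm c unfolding strict_mono_on_def C_def
    by (auto intro!: add_less_le_mono mult_left_mono)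
  have C0: "C 0 = 0" using B0 unfolding C_def by simp
  have Cnn: "C r \<ge> 0" if "r \<ge> 0" for r using Bnn[OF that] c that unfolding C_def by simp
  have bc: "continuous_on ({0..} \<times> {0..}) (\<lambda>(s,t). \<beta> s t)" using b unfolding class_KL_def by simp
  let ?F = "\<lambda>r t. \<beta> (B r) (max (t - T) 0) + C r * exp (T - t)"
  have eqF: "(\<lambda>r t. \<beta> (\<beta> r 0 + \<gamma> r) (max (t - T) 0) + (\<beta> r 0 + \<gamma> r + c * r) * exp (T - t)) = ?F"
    unfolding B_def C_def by simp
  have cont: "continuous_on ({0..} \<times> {0..}) (\<lambda>(r,t). ?F r t)"
  proof -
    have c1: "continuous_on ({0..} \<times> {0..}) (\<lambda>z. (B (fst z), max (snd z - T) 0))"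
    proof (rule continuous_on_Pair)
      show "continuous_on ({0..} \<times> {0..}) (\<lambda>z. B (fst z))"
        by (rule continuous_on_compose2[OF Bc continuous_on_fst[OF continuous_on_id]]) auto
      show "continuous_on ({0..} \<times> {0..}) (\<lambda>z. max (snd z - T) (0::real))"
        by (intro continuous_on_max continuous_on_diff continuous_on_snd continuous_on_id continuous_on_const)
    qed
    have c2: "continuous_on ({0..} \<times> {0..}) (\<lambda>z. (\<lambda>(s,t). \<beta> s t) (B (fst z), max (snd z - T) 0))"
      by (rule continuous_on_compose2[OF bc c1]) (auto intro: Bnn)
    have c3: "continuous_on ({0..} \<times> {0..}) (\<lambda>z. C (fst z) * exp (T - snd z))"
    proof (rule continuous_on_mult)
      show "continuous_on ({0..} \<times> {0..}) (\<lambda>z. C (fst z))"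
        by (rule continuous_on_compose2[OF Cc continuous_on_fst[OF continuous_on_id]]) auto
      show "continuous_on ({0..} \<times> {0..}) (\<lambda>z. exp (T - snd z))"
        by (intro continuous_on_exp continuous_on_diff continuous_on_snd continuous_on_id continuous_on_const)
    qed
    have "continuous_on ({0..} \<times> {0..}) (\<lambda>z. (\<lambda>(s,t). \<beta> s t) (B (fst z), max (snd z - T) 0) + C (fst z) * exp (T - snd z))"
      using c2 c3 by (rule continuous_on_add)
    then show ?thesis by (simp add: case_prod_beta)
  qed
  have K: "class_K (\<lambda>r. ?F r t)" if t: "t \<ge> 0" for t
  proof -
    have bt: "class_K (\<lambda>s. \<beta> s (max (t - T) 0))" using KL_K[OF b] by simp
    have "continuous_on {0..} (\<lambda>r. \<beta> (B r) (max (t - T) 0))"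
      by (rule continuous_on_compose2[OF _ Bc, of "{0..}" "\<lambda>s. \<beta> s (max (t - T) 0)"])
        (use bt Bnn in \<open>auto simp: class_K_def\<close>)
    moreover have "continuous_on {0..} (\<lambda>r. C r * exp (T - t))" using Cc by (intro continuous_on_mult continuous_on_const)
    ultimately have "continuous_on {0..} (\<lambda>r. ?F r t)" by (rule continuous_on_add)
    moreover have "?F 0 t = 0" using B0 C0 bt unfolding class_K_def by simp
    moreover have "strict_mono_on {0..} (\<lambda>r. ?F r t)"
    proof (rule strict_mono_onI)
      fix r s :: real assume "r \<in> {0..}" "s \<in> {0..}" "r < s"
      then have "B r < B s" "C r < C s" using Bsm Csm unfolding strict_mono_on_def by auto
      then have "\<beta> (B r) (max (t - T) 0) < \<beta> (B s) (max (t - T) 0)"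
        using bt Bnn \<open>r \<in> {0..}\<close> \<open>s \<in> {0..}\<close> unfolding class_K_def strict_mono_on_def by auto
      moreover have "C r * exp (T - t) < C s * exp (T - t)" using \<open>C r < C s\<close> by simp
      ultimately show "?F r t < ?F s t" by (rule add_strict_mono)
    qed
    ultimately show ?thesis unfolding class_K_def by simp
  qed
  have D: "(\<forall>t1 t2. 0 \<le> t1 \<longrightarrow> t1 \<le> t2 \<longrightarrow> ?F s t2 \<le> ?F s t1) \<and> ((\<lambda>t. ?F s t) \<longlongrightarrow> 0) at_top"
    if s: "s \<ge> 0" for s
  proof
    show "\<forall>t1 t2. 0 \<le> t1 \<longrightarrow> t1 \<le> t2 \<longrightarrow> ?F s t2 \<le> ?F s t1"
    proof (intro allI impI)
      fix t1 t2 :: real assume "0 \<le> t1" "t1 \<le> t2"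
      have "\<beta> (B s) (max (t2 - T) 0) \<le> \<beta> (B s) (max (t1 - T) 0)"
        by (rule KL_dec[OF b Bnn[OF s]]) (use \<open>t1 \<le> t2\<close> in auto)
      moreover have "C s * exp (T - t2) \<le> C s * exp (T - t1)"
        using Cnn[OF s] \<open>t1 \<le> t2\<close> by (auto intro!: mult_left_mono)
      ultimately show "?F s t2 \<le> ?F s t1" by simp
    qed
    have l1: "((\<lambda>t. \<beta> (B s) t) \<longlongrightarrow> 0) at_top" using b Bnn[OF s] unfolding class_KL_def by auto
    have "filterlim (\<lambda>t. max (t - T) 0) at_top at_top"
      unfolding filterlim_at_top
    proof
      fix Z :: real
      show "\<forall>\<^sub>F t in at_top. Z \<le> max (t - T) 0"
        using eventually_ge_at_top[of "Z + T"] by eventually_elim simp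
    qed
    then have l2: "((\<lambda>t. \<beta> (B s) (max (t - T) 0)) \<longlongrightarrow> 0) at_top"
      using filterlim_compose[OF l1] by blast
    have "filterlim (\<lambda>t. T - t) at_bot at_top"
      by (simp add: filterlim_at_bot eventually_at_top_linorder) (metis diff_le_eq add.commute le_diff_eq)
    then have "((\<lambda>t. exp (T - t)) \<longlongrightarrow> 0) at_top"
      using filterlim_compose[OF exp_at_bot] by blast
    then have l3: "((\<lambda>t. C s * exp (T - t)) \<longlongrightarrow> 0) at_top"
      using tendsto_mult_right_zero by blast
    show "((\<lambda>t. ?F s t) \<longlongrightarrow> 0) at_top" using tendsto_add[OF l2 l3] by simp
  qed
  show ?thesis unfolding eqF class_KL_def using cont K D by blast
qed



lemma atbot_Ici: "(t::real) \<ge> 0 \<Longrightarrow> at t within {0..} \<noteq> bot"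
proof -
  assume t: "t \<ge> 0"
  have "t islimpt {t..t+1}" by simp
  then have "t islimpt {0..}" by (rule islimpt_subset) (use t in auto)
  then show ?thesis using trivial_limit_within by blast
qed

lemma atbot_Icc: "(x::real) \<in> {0..1} \<Longrightarrow> at x within {0..1} \<noteq> bot"
proof -
  assume "x \<in> {0..1}"
  then have "x islimpt {0..1::real}" using islimpt_Icc[of 0 1 x] by simp
  then show ?thesis using trivial_limit_within by blast
qed


lemma cont_bound:
  fixes g :: "'a::metric_space \<Rightarrow> 'b::real_normed_vector"
  assumes "continuous_on K g" "compact K"
  obtains B where "B \<ge> 0" "\<And>x. x \<in> K \<Longrightarrow> norm (g x) \<le> B"
proof -
  have "bounded (g ` K)" using compact_imp_bounded[OF compact_continuous_image[OF assms]] .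
  then obtain B where "\<forall>y\<in>g ` K. norm y \<le> B" using bounded_iff by blast
  then show ?thesis using that[of "max B 0"] by force
qed

lemma blin2: "blinfun_apply D (a::real, b::real) = a * blinfun_apply D (1,0) + b * blinfun_apply D (0,1)"
proof -
  have "(a,b) = a *\<^sub>R (1::real,0::real) + b *\<^sub>R (0,1)" by simp
  then show ?thesis by (metis blinfun.add_right blinfun.scaleR_right real_scaleR_def)
qed

lemma lip_real:
  fixes g :: "real \<Rightarrow> real"
  assumes "\<And>s. (g has_real_derivative deriv g s) (at s)" "continuous_on UNIV (deriv g)"
  shows "\<exists>L\<ge>0. \<forall>y z. \<bar>y\<bar> \<le> H \<longrightarrow> \<bar>z\<bar> \<le> H \<longrightarrow> \<bar>g y - g z\<bar> \<le> L * \<bar>y - z\<bar>"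
proof -
  obtain L where L: "L \<ge> 0" "\<And>s. s \<in> {-H..H} \<Longrightarrow> norm (deriv g s) \<le> L"
    using cont_bound[of "{-H..H}" "deriv g"] continuous_on_subset[OF assms(2)] by blast
  have "\<bar>g y - g z\<bar> \<le> L * \<bar>y - z\<bar>" if "\<bar>y\<bar> \<le> H" "\<bar>z\<bar> \<le> H" for y z
  proof -
    have "norm (g y - g z) \<le> L * norm (y - z)"
    proof (rule differentiable_bound[of "{-H..H}" g "\<lambda>s h. deriv g s * h"])
      show "convex {-H..H}" by simp
      show "(g has_derivative (\<lambda>h. deriv g x * h)) (at x within {-H..H})" for x
        using assms(1)[of x] has_field_derivative_imp_has_derivative has_derivative_at_withinI by blast
      show "onorm (\<lambda>h. deriv g x * h) \<le> L" if "x \<in> {-H..H}" for x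
        by (rule onorm_bound) (use L that in \<open>auto simp: abs_mult intro!: mult_right_mono\<close>)
    qed (use that in auto)
    then show ?thesis by simp
  qed
  then show ?thesis using L by blast
qed


lemma deriv_le:
  fixes F G :: "real \<Rightarrow> real"
  assumes F: "(F has_real_derivative d) (at x within S)" and G: "(G has_real_derivative e) (at x within S)"
    and nb: "at x within S \<noteq> bot"
    and ev: "eventually (\<lambda>y. \<bar>F y - F x\<bar> \<le> B * \<bar>G y - G x\<bar>) (at x within S)"
  shows "\<bar>d\<bar> \<le> B * \<bar>e\<bar>"
proof (rule tendsto_le[OF _ _ _])
  show "\<not> trivial_limit (at x within S)" using nb by simp
  show "((\<lambda>y. B * \<bar>(G y - G x) / (y - x)\<bar>) \<longlongrightarrow> B * \<bar>e\<bar>) (at x within S)"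
    using G unfolding has_field_derivative_iff by (intro tendsto_mult tendsto_const tendsto_rabs)
  show "((\<lambda>y. \<bar>(F y - F x) / (y - x)\<bar>) \<longlongrightarrow> \<bar>d\<bar>) (at x within S)"
    using F unfolding has_field_derivative_iff by (intro tendsto_rabs)
  show "eventually (\<lambda>y. \<bar>(F y - F x) / (y - x)\<bar> \<le> B * \<bar>(G y - G x) / (y - x)\<bar>) (at x within S)"
    using ev
  proof eventually_elim
    case (elim y)
    then show ?case by (simp add: abs_divide divide_right_mono)
  qed
qed

lemma ev_within: "(\<And>y. y \<in> S \<Longrightarrow> P y) \<Longrightarrow> eventually P (at x within S)"
  by (simp add: eventually_at_filter)

locale sol =
  fixes f :: "real^'n \<Rightarrow> real \<Rightarrow> real^'n" and v :: "real \<Rightarrow> real" and \<kappa> :: "real^'n \<Rightarrow> real"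
    and X :: "real \<Rightarrow> real^'n" and u :: "real \<Rightarrow> real \<Rightarrow> real" and p :: "real \<Rightarrow> real \<Rightarrow> real^'n"
    and M vl :: real
    and Df :: "(real^'n) \<times> real \<Rightarrow> ((real^'n) \<times> real) \<Rightarrow>\<^sub>L (real^'n)"
    and Dk :: "(real^'n) \<Rightarrow> (real^'n) \<Rightarrow>\<^sub>L real"
    and Du :: "real \<times> real \<Rightarrow> (real \<times> real) \<Rightarrow>\<^sub>L real"
  assumes Df_cont: "continuous_on UNIV Df"
    and Df_der: "\<And>z. ((\<lambda>(a,b). f a b) has_derivative blinfun_apply (Df z)) (at z)"
    and v_der: "\<And>s. (v has_real_derivative deriv v s) (at s)"
    and v'_cont: "continuous_on UNIV (deriv v)"
    and vl_pos: "vl > 0" and vl_le: "\<And>s. vl \<le> v s"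
    and Dk_cont: "continuous_on UNIV Dk"
    and Dk_der: "\<And>z. (\<kappa> has_derivative blinfun_apply (Dk z)) (at z)"
    and Du_cont: "continuous_on ({0..1} \<times> {0..}) Du"
    and Du_der: "\<And>z. z \<in> {0..1} \<times> {0..} \<Longrightarrow>
        ((\<lambda>(x,t). u x t) has_derivative blinfun_apply (Du z)) (at z within {0..1} \<times> {0..})"
    and X_der: "\<And>t. t \<ge> 0 \<Longrightarrow> (X has_vector_derivative f (X t) (u 0 t)) (at t within {0..})"
    and pde: "\<And>x t. x \<in> {0..1} \<Longrightarrow> t \<ge> 0 \<Longrightarrow> pt u x t = v (u x t) * px u x t"
    and bc: "\<And>t. t \<ge> 0 \<Longrightarrow> u 1 t = \<kappa> (p 1 t)"
    and p_cont: "\<And>t. t \<ge> 0 \<Longrightarrow> continuous_on {0..1} (\<lambda>x. p x t)"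
    and p_int: "\<And>x t. x \<in> {0..1} \<Longrightarrow> t \<ge> 0 \<Longrightarrow>
        p x t = X t + integral {0..x} (\<lambda>y. Gam v (u y t) (px u y t) y *\<^sub>R f (p y t) (u y t))"
    and feas: "\<And>x t. x \<in> {0..1} \<Longrightarrow> t \<ge> 0 \<Longrightarrow>
        - M < deriv v (u x t) * px u x t / v (u x t) \<and> deriv v (u x t) * px u x t / v (u x t) < 1"
    and M_pos: "M > 0"
begin

lemma v_pos: "v s > 0" using vl_pos vl_le[of s] by linarith

lemma v_nz [simp]: "v s \<noteq> 0" using v_pos[of s] by linarith

lemma v_isCont: "isCont v s" using v_der DERIV_isCont by blast

lemma v_contUNIV: "continuous_on UNIV v" using v_isCont continuous_at_imp_continuous_on by blast

lemma u_der2: "z \<in> {0..1} \<times> {0..} \<Longrightarrow> (g has_derivative g') (at s within A) \<Longrightarrow> g ` A \<subseteq> {0..1} \<times> {0..} \<Longrightarrow> g s = z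
  \<Longrightarrow> s \<in> A \<Longrightarrow> ((\<lambda>s. (\<lambda>(x,t). u x t) (g s)) has_derivative (\<lambda>h. Du z (g' h))) (at s within A)"
  using has_derivative_in_compose2[of "{0..1} \<times> {0..}" "\<lambda>(x,t). u x t" "\<lambda>z. blinfun_apply (Du z)" g A s g']
    Du_der by auto

lemma ux: assumes x: "x \<in> {0..1}" and t: "t \<ge> 0"
  shows "((\<lambda>y. u y t) has_vector_derivative Du (x,t) (1,0)) (at x within {0..1})"
proof -
  have "((\<lambda>y. (y,t)) has_derivative (\<lambda>h. (h,0))) (at x within {0..1})"
    by (rule has_derivative_Pair[OF has_derivative_ident has_derivative_const])
  moreover have "(\<lambda>y. (y,t)) ` {0..1} \<subseteq> {0..1} \<times> {0..}" using t by auto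
  ultimately have "((\<lambda>y. u y t) has_derivative (\<lambda>h. Du (x,t) (h,0))) (at x within {0..1})"
    using u_der2[of "(x,t)" "\<lambda>y. (y,t)" "\<lambda>h. (h,0)" x "{0..1}"] x t by auto
  moreover have "(\<lambda>h. Du (x,t) (h,0)) = (\<lambda>h. h *\<^sub>R Du (x,t) (1,0))"
  proof
    fix h :: real have "(h,0::real) = h *\<^sub>R (1,0)" by simp
    then show "Du (x,t) (h,0) = h *\<^sub>R Du (x,t) (1,0)" by (metis blinfun.scaleR_right)
  qed
  ultimately show ?thesis unfolding has_vector_derivative_def by simp
qed

lemma px_eq: "x \<in> {0..1} \<Longrightarrow> t \<ge> 0 \<Longrightarrow> px u x t = Du (x,t) (1,0)"
  unfolding px_def by (rule vector_derivative_within_closed_interval[OF _ _ ux]) auto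

lemma ut: assumes x: "x \<in> {0..1}" and t: "t \<ge> 0"
  shows "((\<lambda>s. u x s) has_vector_derivative Du (x,t) (0,1)) (at t within {0..})"
proof -
  have "((\<lambda>s. (x,s)) has_derivative (\<lambda>h. (0,h))) (at t within {0..})"
    by (rule has_derivative_Pair[OF has_derivative_const has_derivative_ident])
  moreover have "(\<lambda>s. (x,s)) ` {0..} \<subseteq> {0..1} \<times> {0..}" using x by auto
  ultimately have "((\<lambda>s. u x s) has_derivative (\<lambda>h. Du (x,t) (0,h))) (at t within {0..})"
    using u_der2[of "(x,t)" "\<lambda>s. (x,s)" "\<lambda>h. (0,h)" t "{0..}"] x t by auto
  moreover have "(\<lambda>h. Du (x,t) (0,h)) = (\<lambda>h. h *\<^sub>R Du (x,t) (0,1))"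
  proof
    fix h :: real have "(0::real,h) = h *\<^sub>R (0,1)" by simp
    then show "Du (x,t) (0,h) = h *\<^sub>R Du (x,t) (0,1)" by (metis blinfun.scaleR_right)
  qed
  ultimately show ?thesis unfolding has_vector_derivative_def by simp
qed

lemma pt_eq: "x \<in> {0..1} \<Longrightarrow> t \<ge> 0 \<Longrightarrow> pt u x t = Du (x,t) (0,1)"
  unfolding pt_def by (rule vector_derivative_within[OF atbot_Ici ut])

lemma ut_ux: "x \<in> {0..1} \<Longrightarrow> t \<ge> 0 \<Longrightarrow> Du (x,t) (0,1) = v (u x t) * Du (x,t) (1,0)"
  using pde px_eq pt_eq by simp

lemma u_cont: "continuous_on ({0..1} \<times> {0..}) (\<lambda>(x,t). u x t)"
  using Du_der has_derivative_continuous continuous_on_eq_continuous_within by blast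


lemma char_const:
  assumes x0: "x0 \<in> {0..1}" and a: "0 \<le> a" "a \<le> t0" "t0 \<le> b"
    and line: "\<And>s. s \<in> {a..b} \<Longrightarrow> x0 - v (u x0 t0) * (s - t0) \<in> {0..1}"
    and s: "s \<in> {a..b}"
  shows "u (x0 - v (u x0 t0) * (s - t0)) s = u x0 t0"
proof -
  define c where "c = u x0 t0"
  define vc where "vc = v c"
  define \<eta> where "\<eta> s = x0 - vc * (s - t0)" for s
  define g where "g s = (\<eta> s, s)" for s
  have gD: "g s \<in> {0..1} \<times> {0..}" if "s \<in> {a..b}" for s
    using line[OF that] that a unfolding g_def \<eta>_def vc_def c_def by auto
  have gimg: "g ` {a..b} \<subseteq> {0..1} \<times> {0..}" using gD by blast
  have gcont: "continuous_on {a..b} g" unfolding g_def \<eta>_def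
    by (intro continuous_intros)
  have hd: "((\<lambda>s. u (\<eta> s) s - c) has_vector_derivative
      (Du (g s) (1,0) * (v (u (\<eta> s) s) - vc))) (at s within {a..b})" if s: "s \<in> {a..b}" for s
  proof -
    have "(\<eta> has_real_derivative (-vc)) (at s within {a..b})" unfolding \<eta>_def
      by (auto intro!: derivative_eq_intros)
    then have "(g has_derivative (\<lambda>h. ((-vc) * h, h))) (at s within {a..b})"
      unfolding g_def using has_derivative_Pair[OF _ has_derivative_ident]
      by (metis has_field_derivative_imp_has_derivative)
    from u_der2[OF gD[OF s] this gimg _ s] have
      "((\<lambda>s. u (\<eta> s) s) has_derivative (\<lambda>h. Du (g s) ((-vc) * h, h))) (at s within {a..b})"
      unfolding g_def by simp
    moreover have "Du (g s) ((-vc) * h, h) = h * (Du (g s) (1,0) * (v (u (\<eta> s) s) - vc))" for h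
    proof -
      have "Du (g s) ((-vc) * h, h) = h * (Du (g s) (0,1) - vc * Du (g s) (1,0))"
        by (subst blin2) (simp add: algebra_simps)
      also have "Du (g s) (0,1) = v (u (\<eta> s) s) * Du (g s) (1,0)"
        using ut_ux[of "\<eta> s" s] gD[OF s] unfolding g_def by auto
      finally show ?thesis by (simp add: algebra_simps)
    qed
    ultimately have "((\<lambda>s. u (\<eta> s) s) has_derivative (\<lambda>h. h * (Du (g s) (1,0) * (v (u (\<eta> s) s) - vc)))) (at s within {a..b})"
      by simp
    then show ?thesis unfolding has_vector_derivative_def
      by (auto intro!: derivative_eq_intros)
  qed
  have Dc: "continuous_on {a..b} (\<lambda>s. Du (g s) (1,0))"
    by (rule bounded_bilinear.continuous_on[OF bounded_bilinear_blinfun_apply _ continuous_on_const])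
      (rule continuous_on_compose2[OF Du_cont gcont gimg])
  obtain P where P: "P \<ge> 0" "\<And>s. s \<in> {a..b} \<Longrightarrow> norm (Du (g s) (1,0)) \<le> P"
    using cont_bound[OF Dc] by blast
  have uc: "continuous_on {a..b} (\<lambda>s. u (\<eta> s) s)"
    using continuous_on_compose2[OF u_cont gcont gimg] unfolding g_def by simp
  obtain H where H: "H \<ge> 0" "\<And>s. s \<in> {a..b} \<Longrightarrow> norm (u (\<eta> s) s) \<le> H"
    using cont_bound[OF uc] by blast
  have t0ab: "t0 \<in> {a..b}" using a by auto
  have etat0: "\<eta> t0 = x0" unfolding \<eta>_def by simp
  have cH: "\<bar>c\<bar> \<le> H" using H(2)[OF t0ab] etat0 unfolding c_def by simp
  obtain L where L: "L \<ge> 0" "\<And>y z. \<bar>y\<bar> \<le> H \<Longrightarrow> \<bar>z\<bar> \<le> H \<Longrightarrow> \<bar>v y - v z\<bar> \<le> L * \<bar>y - z\<bar>"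
    using lip_real[OF v_der v'_cont, of H] by blast
  have bd: "norm (Du (g s) (1,0) * (v (u (\<eta> s) s) - vc)) \<le> (P * L) * norm (u (\<eta> s) s - c)"
    if s: "s \<in> {a..b}" for s
  proof -
    have "\<bar>v (u (\<eta> s) s) - vc\<bar> \<le> L * \<bar>u (\<eta> s) s - c\<bar>"
      unfolding vc_def using L(2)[of "u (\<eta> s) s" c] H(2)[OF s] cH by simp
    then show ?thesis using P(2)[OF s] P(1) L(1)
      by (simp add: abs_mult mult.assoc mult_mono)
  qed
  have z: "u (\<eta> t0) t0 - c = 0" using etat0 unfolding c_def by simp
  have "u (\<eta> s) s - c = 0"
  proof (cases "s \<le> t0")
    case True
    show ?thesis
    proof (rule gronwall_bwd[of a t0 "\<lambda>s. u (\<eta> s) s - c"])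
      show "((\<lambda>s. u (\<eta> s) s - c) has_vector_derivative Du (g s) (1,0) * (v (u (\<eta> s) s) - vc)) (at s within {a..t0})"
        if "s \<in> {a..t0}" for s
        using hd[of s] that a by (auto intro: has_vector_derivative_within_subset)
      show "norm (Du (g s) (1,0) * (v (u (\<eta> s) s) - vc)) \<le> (P * L) * norm (u (\<eta> s) s - c)"
        if "s \<in> {a..t0}" for s using bd[of s] that a by auto
    qed (use a s True z in auto)
  next
    case False
    show ?thesis
    proof (rule gronwall_fwd[of t0 b "\<lambda>s. u (\<eta> s) s - c"])
      show "((\<lambda>s. u (\<eta> s) s - c) has_vector_derivative Du (g s) (1,0) * (v (u (\<eta> s) s) - vc)) (at s within {t0..b})"
        if "s \<in> {t0..b}" for s
        using hd[of s] that a by (auto intro: has_vector_derivative_within_subset)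
      show "norm (Du (g s) (1,0) * (v (u (\<eta> s) s) - vc)) \<le> (P * L) * norm (u (\<eta> s) s - c)"
        if "s \<in> {t0..b}" for s using bd[of s] that a by auto
    qed (use a s False z in auto)
  qed
  then show ?thesis unfolding \<eta>_def vc_def c_def by simp
qed


lemma f_cont: "continuous_on UNIV (\<lambda>(a,b). f a b)"
  using Df_der has_derivative_continuous continuous_at_imp_continuous_on by blast

lemma f_comp_cont: "continuous_on S A \<Longrightarrow> continuous_on S B \<Longrightarrow> continuous_on S (\<lambda>s. f (A s) (B s))"
  using continuous_on_compose2[OF f_cont continuous_on_Pair, of S A B] by auto

lemma pair_cont: "continuous_on S (\<lambda>y::real. (y, t::real))"
  by (intro continuous_on_Pair continuous_on_id continuous_on_const)

lemma pair_img: "t \<ge> 0 \<Longrightarrow> (\<lambda>y. (y,t)) ` {0..1} \<subseteq> {0..1::real} \<times> {0::real..}"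
  by auto

lemma u_contx: "t \<ge> 0 \<Longrightarrow> continuous_on {0..1} (\<lambda>y. u y t)"
  using continuous_on_compose2[OF u_cont pair_cont pair_img]
  by auto

lemma ux_cont: assumes t: "t \<ge> 0" shows "continuous_on {0..1} (\<lambda>y. px u y t)"
proof -
  have "continuous_on {0..1} (\<lambda>y. Du (y,t))"
    using continuous_on_compose2[OF Du_cont pair_cont pair_img[OF t]] .
  then have "continuous_on {0..1} (\<lambda>y. Du (y,t) (1,0))"
    by (rule bounded_bilinear.continuous_on[OF bounded_bilinear_blinfun_apply _ continuous_on_const])
  then show ?thesis using px_eq t by (auto intro: continuous_on_cong[THEN iffD1])
qed

lemma v_comp_cont: "continuous_on S g \<Longrightarrow> continuous_on S (\<lambda>s. v (g s))"
  using continuous_on_compose2[OF v_contUNIV] by auto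

lemma v'_comp_cont: "continuous_on S g \<Longrightarrow> continuous_on S (\<lambda>s. deriv v (g s))"
  using continuous_on_compose2[OF v'_cont] by auto

lemma Gam_cont: assumes t: "t \<ge> 0" shows "continuous_on {0..1} (\<lambda>y. Gam v (u y t) (px u y t) y)"
  unfolding Gam_def
  using u_contx[OF t] ux_cont[OF t] v_pos
  by (intro continuous_on_diff continuous_on_divide continuous_on_mult continuous_on_const continuous_on_id
      v_comp_cont v'_comp_cont continuous_on_power) auto

lemma integrand_cont: assumes t: "t \<ge> 0"
  shows "continuous_on {0..1} (\<lambda>y. Gam v (u y t) (px u y t) y *\<^sub>R f (p y t) (u y t))"
  by (intro continuous_on_scaleR Gam_cont f_comp_cont p_cont u_contx t)

lemma p_der: assumes x: "x \<in> {0..1}" and t: "t \<ge> 0"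
  shows "((\<lambda>x. p x t) has_vector_derivative (Gam v (u x t) (px u x t) x *\<^sub>R f (p x t) (u x t))) (at x within {0..1})"
proof -
  have "((\<lambda>x. X t + integral {0..x} (\<lambda>y. Gam v (u y t) (px u y t) y *\<^sub>R f (p y t) (u y t)))
      has_vector_derivative (Gam v (u x t) (px u x t) x *\<^sub>R f (p x t) (u x t))) (at x within {0..1})"
    using has_vector_derivative_add[OF has_vector_derivative_const integral_has_vector_derivative[OF integrand_cont[OF t] x]]
    by simp
  then show ?thesis
    by (rule has_vector_derivative_transform_within[of _ _ _ _ 1]) (use x p_int t in auto)
qed

lemma f_lip: "\<exists>L\<ge>0. \<forall>a b w. norm a \<le> R \<longrightarrow> norm b \<le> R \<longrightarrow> \<bar>w\<bar> \<le> U \<longrightarrow> norm (f a w - f b w) \<le> L * norm (a - b)"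
proof -
  have "compact (cball (0::real^'n) R \<times> cball (0::real) U)" by (intro compact_Times compact_cball)
  then obtain B where B: "B \<ge> 0" "\<And>z. z \<in> cball 0 R \<times> cball 0 U \<Longrightarrow> norm (Df z) \<le> B"
    using cont_bound[of "cball 0 R \<times> cball 0 U" Df] continuous_on_subset[OF Df_cont] by blast
  have "norm (f a w - f b w) \<le> B * norm (a - b)" if ab: "norm a \<le> R" "norm b \<le> R" "\<bar>w\<bar> \<le> U" for a b w
  proof (rule differentiable_bound[of "cball 0 R" "\<lambda>a. f a w" "\<lambda>a h. Df (a,w) (h,0)"])
    show "convex (cball (0::real^'n) R)" by simp
    show "((\<lambda>a. f a w) has_derivative (\<lambda>h. Df (x,w) (h,0))) (at x within cball 0 R)" for x
    proof -
      have "((\<lambda>a. (a,w)) has_derivative (\<lambda>h. (h,0))) (at x within cball 0 R)"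
        by (rule has_derivative_Pair[OF has_derivative_ident has_derivative_const])
      from has_derivative_compose[OF this Df_der] show ?thesis by simp
    qed
    show "onorm (\<lambda>h. Df (x,w) (h,0)) \<le> B" if "x \<in> cball 0 R" for x
    proof (rule onorm_bound[OF B(1)])
      fix h :: "real^'n"
      have "norm (Df (x,w) (h,0)) \<le> norm (Df (x,w)) * norm (h, 0::real)" by (rule norm_blinfun)
      also have "\<dots> \<le> B * norm h" using B(2)[of "(x,w)"] that ab by (auto simp: norm_Pair intro!: mult_right_mono)
      finally show "norm (Df (x,w) (h,0)) \<le> B * norm h" .
    qed
  qed (use ab in auto)
  then show ?thesis using B by blast
qed

lemma p_char: assumes x: "x \<in> {0..1}" and t: "t \<ge> 0"
  shows "p x t = X (t + x / v (u x t))"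
proof -
  define \<tau> where "\<tau> y = t + y / v (u y t)" for y
  define P where "P y = X (\<tau> y)" for y
  define G where "G y = Gam v (u y t) (px u y t) y" for y
  have \<tau>ge: "\<tau> y \<ge> t" if "y \<in> {0..1}" for y using that v_pos[of "u y t"] unfolding \<tau>_def by simp
  have \<tau>d: "(\<tau> has_vector_derivative G y) (at y within {0..1})" if y: "y \<in> {0..1}" for y
  proof -
    have ud: "((\<lambda>y. u y t) has_real_derivative px u y t) (at y within {0..1})"
      using ux[OF y t] px_eq[OF y t] by (simp add: has_real_derivative_iff_has_vector_derivative)
    have vd: "((\<lambda>y. v (u y t)) has_real_derivative deriv v (u y t) * px u y t) (at y within {0..1})"
      using DERIV_chain2[OF v_der ud] by simp
    have "(\<tau> has_real_derivative (1 * v (u y t) - y * (deriv v (u y t) * px u y t)) / (v (u y t) * v (u y t))) (at y within {0..1})"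
      unfolding \<tau>_def using v_pos[of "u y t"]
      by (auto intro!: derivative_eq_intros vd)
    moreover have "(1 * v (u y t) - y * (deriv v (u y t) * px u y t)) / (v (u y t) * v (u y t)) = G y"
      unfolding G_def Gam_def using v_pos[of "u y t"] by (simp add: field_simps power2_eq_square)
    ultimately show ?thesis by (simp add: has_real_derivative_iff_has_vector_derivative)
  qed
  have Pd: "(P has_vector_derivative G y *\<^sub>R f (P y) (u y t)) (at y within {0..1})" if y: "y \<in> {0..1}" for y
  proof -
    have "(X has_vector_derivative f (X (\<tau> y)) (u 0 (\<tau> y))) (at (\<tau> y) within \<tau> ` {0..1})"
    proof (rule has_vector_derivative_within_subset[OF X_der])
      show "0 \<le> \<tau> y" using \<tau>ge[OF y] t by simp
      show "\<tau> ` {0..1} \<subseteq> {0..}" using \<tau>ge t by force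
    qed
    from vector_diff_chain_within[OF \<tau>d[OF y] this]
    have "(P has_vector_derivative G y *\<^sub>R f (X (\<tau> y)) (u 0 (\<tau> y))) (at y within {0..1})"
      unfolding P_def o_def by simp
    moreover have "u 0 (\<tau> y) = u y t"
    proof -
      have "u (y - v (u y t) * (\<tau> y - t)) (\<tau> y) = u y t"
      proof (rule char_const[OF y t])
        show "t \<le> \<tau> y" using \<tau>ge[OF y] .
        show "y - v (u y t) * (s - t) \<in> {0..1}" if "s \<in> {t..\<tau> y}" for s
        proof -
          have "v (u y t) * (s - t) \<le> v (u y t) * (\<tau> y - t)" using that v_pos[of "u y t"] by simp
          also have "\<dots> = y" unfolding \<tau>_def using v_pos[of "u y t"] by simp
          moreover have "v (u y t) * (s - t) \<ge> 0" using that v_pos[of "u y t"] by simp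
          ultimately show ?thesis using that y by auto
        qed
      qed (use \<tau>ge[OF y] in auto)
      moreover have "y - v (u y t) * (\<tau> y - t) = 0" unfolding \<tau>_def using v_pos[of "u y t"] by simp
      ultimately show ?thesis by simp
    qed
    ultimately show ?thesis unfolding P_def by simp
  qed
  have Pc: "continuous_on {0..1} P"
    using Pd continuous_on_eq_continuous_within has_vector_derivative_continuous by blast
  obtain R1 where R1: "\<And>y. y \<in> {0..1} \<Longrightarrow> norm (p y t) \<le> R1"
    using cont_bound[OF p_cont[OF t]] by blast
  obtain R2 where R2: "\<And>y. y \<in> {0..1} \<Longrightarrow> norm (P y) \<le> R2"
    using cont_bound[OF Pc] by blast
  obtain U where U: "\<And>y. y \<in> {0..1} \<Longrightarrow> norm (u y t) \<le> U"
    using cont_bound[OF u_contx[OF t]] by blast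
  obtain Gb where Gb: "Gb \<ge> 0" "\<And>y. y \<in> {0..1} \<Longrightarrow> norm (G y) \<le> Gb"
    using cont_bound[OF Gam_cont[OF t]] unfolding G_def by blast
  obtain L where L: "L \<ge> 0" "\<And>a b w. norm a \<le> max R1 R2 \<Longrightarrow> norm b \<le> max R1 R2 \<Longrightarrow> \<bar>w\<bar> \<le> U
      \<Longrightarrow> norm (f a w - f b w) \<le> L * norm (a - b)"
    using f_lip[of "max R1 R2" U] by blast
  have "p x t - P x = 0"
  proof (rule gronwall_fwd[of 0 1 "\<lambda>y. p y t - P y" "\<lambda>y. G y *\<^sub>R (f (p y t) (u y t) - f (P y) (u y t))" "Gb * L"])
    show "((\<lambda>y. p y t - P y) has_vector_derivative G s *\<^sub>R (f (p s t) (u s t) - f (P s) (u s t))) (at s within {0..1})"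
      if "s \<in> {0..1}" for s
      using has_vector_derivative_diff[OF p_der[OF that t] Pd[OF that]] unfolding G_def
      by (simp add: scaleR_diff_right)
    show "norm (G s *\<^sub>R (f (p s t) (u s t) - f (P s) (u s t))) \<le> Gb * L * norm (p s t - P s)"
      if s: "s \<in> {0..1}" for s
    proof -
      have "norm (f (p s t) (u s t) - f (P s) (u s t)) \<le> L * norm (p s t - P s)"
        using L(2) R1[OF s] R2[OF s] U[OF s] by simp
      then show ?thesis using Gb(2)[OF s] Gb(1) L(1)
        by (simp add: mult.assoc mult_mono)
    qed
    show "p 0 t - P 0 = 0" using p_int[of 0 t] t unfolding P_def \<tau>_def by simp
  qed (use x in auto)
  then show ?thesis unfolding P_def \<tau>_def by simp
qed


definition "W x t = wfun \<kappa> u p x t"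
definition "dW x t = px u x t - Dk (p x t) (Gam v (u x t) (px u x t) x *\<^sub>R f (p x t) (u x t))"

lemma W_formula: assumes x: "x \<in> {0..1}" and t: "t \<ge> 0"
  shows "W x t = W (min (x + v (u x t) * t) 1) 0"
proof -
  define c where "c = u x t"
  define vc where "vc = v c"
  have vc: "vc > 0" unfolding vc_def using v_pos .
  show ?thesis
  proof (cases "x + vc * t \<le> 1")
    case True
    define y where "y = x + vc * t"
    have "u (x - v (u x t) * (0 - t)) 0 = u x t"
    proof (rule char_const[OF x, of 0 t t])
      show "x - v (u x t) * (s - t) \<in> {0..1}" if "s \<in> {0..t}" for s
      proof -
        have "vc * (t - s) \<le> vc * t" "vc * (t - s) \<ge> 0" using that vc by auto
        then show ?thesis using True x unfolding vc_def c_def by (auto simp: algebra_simps)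
      qed
    qed (use t in auto)
    then have uy: "u y 0 = c" unfolding y_def vc_def c_def by (simp add: algebra_simps)
    have y01: "y \<in> {0..1}" using True x t vc unfolding y_def by auto
    have "p y 0 = X (y / vc)" using p_char[OF y01, of 0] uy unfolding vc_def by simp
    also have "y / vc = t + x / vc" unfolding y_def using vc by (simp add: field_simps)
    also have "X (t + x / vc) = p x t" using p_char[OF x t] unfolding vc_def c_def by simp
    finally have "p y 0 = p x t" .
    then have "W y 0 = W x t" unfolding W_def wfun_def using uy c_def by simp
    then show ?thesis using True unfolding y_def vc_def c_def by simp
  next
    case False
    define s1 where "s1 = t - (1 - x) / vc"
    have s1: "0 \<le> s1" "s1 \<le> t"
    proof -
      have "1 - x < vc * t" using False by simp
      then have "(1 - x) / vc < t" using vc by (simp add: divide_less_eq mult.commute)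
      then show "0 \<le> s1" unfolding s1_def by simp
      show "s1 \<le> t" unfolding s1_def using x vc by simp
    qed
    have "u (x - v (u x t) * (s1 - t)) s1 = u x t"
    proof (rule char_const[OF x s1(1) s1(2) order_refl])
      show "x - v (u x t) * (s - t) \<in> {0..1}" if "s \<in> {s1..t}" for s
      proof -
        have "vc * (t - s) \<le> vc * (t - s1)" "vc * (t - s) \<ge> 0" using that vc by auto
        moreover have "vc * (t - s1) = 1 - x" unfolding s1_def using vc by simp
        ultimately show ?thesis using x unfolding vc_def c_def by (auto simp: algebra_simps)
      qed
    qed (use s1 in auto)
    moreover have "x - v (u x t) * (s1 - t) = 1" unfolding s1_def using vc unfolding vc_def c_def by simp
    ultimately have u1: "u 1 s1 = c" unfolding c_def by simp
    have "p 1 s1 = X (s1 + 1 / vc)" using p_char[of 1 s1] s1 u1 unfolding vc_def by simp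
    also have "s1 + 1 / vc = t + x / vc" unfolding s1_def using vc by (simp add: field_simps)
    also have "X (t + x / vc) = p x t" using p_char[OF x t] unfolding vc_def c_def by simp
    finally have "p 1 s1 = p x t" .
    then have "W x t = 0" using bc[of s1] s1 u1 unfolding W_def wfun_def c_def by simp
    moreover have "W 1 0 = 0" using bc[of 0] unfolding W_def wfun_def by simp
    ultimately show ?thesis using False unfolding vc_def c_def by simp
  qed
qed

lemma W_der: assumes x: "x \<in> {0..1}" and t: "t \<ge> 0"
  shows "((\<lambda>x. W x t) has_vector_derivative dW x t) (at x within {0..1})"
proof -
  define q where "q = Gam v (u x t) (px u x t) x *\<^sub>R f (p x t) (u x t)"
  have "((\<lambda>x. p x t) has_derivative (\<lambda>h. h *\<^sub>R q)) (at x within {0..1})"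
    using p_der[OF x t] unfolding has_vector_derivative_def q_def .
  from has_derivative_compose[OF this Dk_der]
  have "((\<lambda>x. \<kappa> (p x t)) has_derivative (\<lambda>h. Dk (p x t) (h *\<^sub>R q))) (at x within {0..1})" .
  then have k: "((\<lambda>x. \<kappa> (p x t)) has_vector_derivative Dk (p x t) q) (at x within {0..1})"
    unfolding has_vector_derivative_def by (simp add: blinfun.scaleR_right)
  have "((\<lambda>y. u y t) has_vector_derivative px u x t) (at x within {0..1})"
    using ux[OF x t] px_eq[OF x t] by simp
  from has_vector_derivative_diff[OF this k] show ?thesis
    unfolding W_def wfun_def dW_def q_def by simp
qed

lemma pxW: "x \<in> {0..1} \<Longrightarrow> t \<ge> 0 \<Longrightarrow> px (wfun \<kappa> u p) x t = dW x t"
  unfolding px_def using vector_derivative_within_closed_interval[OF _ _ W_der[unfolded W_def]] by simp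

lemma W_cont: "t \<ge> 0 \<Longrightarrow> continuous_on {0..1} (\<lambda>x. W x t)"
  using W_der continuous_on_eq_continuous_within has_vector_derivative_continuous by blast

lemma dW_cont: assumes t: "t \<ge> 0" shows "continuous_on {0..1} (\<lambda>x. dW x t)"
proof -
  have "continuous_on {0..1} (\<lambda>x. Dk (p x t))"
    using continuous_on_compose2[OF Dk_cont p_cont[OF t]] by simp
  then have "continuous_on {0..1} (\<lambda>x. Dk (p x t) (Gam v (u x t) (px u x t) x *\<^sub>R f (p x t) (u x t)))"
    by (rule bounded_bilinear.continuous_on[OF bounded_bilinear_blinfun_apply _ integrand_cont[OF t]])
  then show ?thesis unfolding dW_def by (intro continuous_on_diff ux_cont t)
qed


definition "a0 = (SUP x\<in>{0..1}. \<bar>W x 0\<bar>)"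
definition "b0 = (SUP x\<in>{0..1}. \<bar>dW x 0\<bar>)"

lemma bdd_cont: "continuous_on {0..1} (g :: real \<Rightarrow> real) \<Longrightarrow> bdd_above ((\<lambda>x. \<bar>g x\<bar>) ` {0..1::real})"
proof -
  assume "continuous_on {0..1} g"
  then obtain B where "\<And>x. x \<in> {0..1} \<Longrightarrow> norm (g x) \<le> B" using cont_bound[of "{0..1}" g] by blast
  then show ?thesis by (intro bdd_aboveI2) simp
qed

lemma W_le_a0_0: "x \<in> {0..1} \<Longrightarrow> \<bar>W x 0\<bar> \<le> a0"
  unfolding a0_def by (rule cSUP_upper[OF _ bdd_cont[OF W_cont]]) auto

lemma dW_le_b0: "x \<in> {0..1} \<Longrightarrow> \<bar>dW x 0\<bar> \<le> b0"
  unfolding b0_def by (rule cSUP_upper[OF _ bdd_cont[OF dW_cont]]) auto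

lemma a0_nn: "a0 \<ge> 0" using W_le_a0_0[of 0] by simp
lemma b0_nn: "b0 \<ge> 0" using dW_le_b0[of 0] by simp

lemma Y_ge: "x \<in> {0..1} \<Longrightarrow> t \<ge> 0 \<Longrightarrow> x + v (u x t) * t \<ge> 0"
  using v_pos[of "u x t"] by simp

lemma W_le_a0: assumes x: "x \<in> {0..1}" and t: "t \<ge> 0" shows "\<bar>W x t\<bar> \<le> a0"
  using W_formula[OF x t] W_le_a0_0[of "min (x + v (u x t) * t) 1"] Y_ge[OF x t] by simp

lemma W_zero: assumes x: "x \<in> {0..1}" and t: "t \<ge> 2 / vl" shows "W x t = 0"
proof -
  have "2 / vl > 0" using vl_pos by simp
  then have t0: "t \<ge> 0" using t by linarith
  have "vl * t \<le> v (u x t) * t" using vl_le t0 by (simp add: mult_right_mono)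
  moreover have "vl * t \<ge> 2" using t vl_pos by (simp add: divide_le_eq mult.commute)
  ultimately have "min (x + v (u x t) * t) 1 = 1" using x by auto
  then show ?thesis using W_formula[OF x t0] bc[of 0] unfolding W_def wfun_def by simp
qed

lemma W0_lip: assumes "y1 \<in> {0..1}" "y2 \<in> {0..1}" shows "\<bar>W y1 0 - W y2 0\<bar> \<le> b0 * \<bar>y1 - y2\<bar>"
proof -
  have "norm (W y1 0 - W y2 0) \<le> b0 * norm (y1 - y2)"
  proof (rule differentiable_bound[of "{0..1}" "\<lambda>x. W x 0" "\<lambda>z h. h * dW z 0"])
    show "((\<lambda>x. W x 0) has_derivative (\<lambda>h. h * dW x 0)) (at x within {0..1})" if "x \<in> {0..1}" for x
      using W_der[OF that order_refl] unfolding has_vector_derivative_def by simp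
    show "onorm (\<lambda>h. h * dW x 0) \<le> b0" if "x \<in> {0..1}" for x
      by (rule onorm_bound[OF b0_nn]) (use dW_le_b0[OF that] in \<open>auto simp: abs_mult mult.commute intro: mult_left_mono\<close>)
  qed (use assms in auto)
  then show ?thesis by simp
qed

lemma Y_der: assumes x: "x \<in> {0..1}" and t: "t \<ge> 0"
  shows "((\<lambda>x. x + v (u x t) * t) has_real_derivative (1 + deriv v (u x t) * px u x t * t)) (at x within {0..1})"
proof -
  have ud: "((\<lambda>y. u y t) has_real_derivative px u x t) (at x within {0..1})"
    using ux[OF x t] px_eq[OF x t] by (simp add: has_real_derivative_iff_has_vector_derivative)
  have vd: "((\<lambda>y. v (u y t)) has_real_derivative deriv v (u x t) * px u x t) (at x within {0..1})"
    using DERIV_chain2[OF v_der ud] by simp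
  show ?thesis by (auto intro!: derivative_eq_intros vd)
qed

lemma dW_zero: assumes x: "x \<in> {0..1}" and t: "t \<ge> 0" and Y: "1 < x + v (u x t) * t"
  shows "dW x t = 0"
proof -
  have "\<bar>dW x t\<bar> \<le> b0 * \<bar>0\<bar>"
  proof (rule deriv_le[of "\<lambda>x. W x t" _ x "{0..1}" "\<lambda>_. 0"])
    show "((\<lambda>x. W x t) has_real_derivative dW x t) (at x within {0..1})"
      using W_der[OF x t] by (simp add: has_real_derivative_iff_has_vector_derivative)
    show "((\<lambda>_. 0) has_real_derivative 0) (at x within {0..1})" by simp
    show "at x within {0..1} \<noteq> bot" using atbot_Icc[OF x] .
    have "((\<lambda>x. x + v (u x t) * t) \<longlongrightarrow> x + v (u x t) * t) (at x within {0..1})"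
      using Y_der[OF x t] has_field_derivative_imp_has_derivative has_derivative_continuous
        continuous_within by blast
    from order_tendstoD(1)[OF this Y]
    have "eventually (\<lambda>y. 1 < y + v (u y t) * t) (at x within {0..1})" .
    moreover have "eventually (\<lambda>y. y \<in> {0..1}) (at x within {0..1})" by (rule ev_within)
    ultimately show "eventually (\<lambda>y. \<bar>W y t - W x t\<bar> \<le> b0 * \<bar>0 - 0\<bar>) (at x within {0..1})"
    proof eventually_elim
      case (elim y)
      then have "W y t = W 1 0" using W_formula[of y t] t by simp
      moreover have "W x t = W 1 0" using W_formula[OF x t] Y by simp
      ultimately show ?case by simp
    qed
  qed
  then show ?thesis by simp
qed

lemma dW_bound: assumes x: "x \<in> {0..1}" and t: "t \<ge> 0"
  shows "\<bar>dW x t\<bar> \<le> (2 + M) * b0"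
proof (cases "1 < x + v (u x t) * t")
  case True then show ?thesis using dW_zero[OF x t] b0_nn M_pos by simp
next
  case False
  define e where "e = 1 + deriv v (u x t) * px u x t * t"
  have "\<bar>dW x t\<bar> \<le> b0 * \<bar>e\<bar>"
  proof (rule deriv_le[of "\<lambda>x. W x t" _ x "{0..1}" "\<lambda>x. x + v (u x t) * t"])
    show "((\<lambda>x. W x t) has_real_derivative dW x t) (at x within {0..1})"
      using W_der[OF x t] by (simp add: has_real_derivative_iff_has_vector_derivative)
    show "((\<lambda>x. x + v (u x t) * t) has_real_derivative e) (at x within {0..1})"
      unfolding e_def by (rule Y_der[OF x t])
    show "at x within {0..1} \<noteq> bot" using atbot_Icc[OF x] .
    show "eventually (\<lambda>y. \<bar>W y t - W x t\<bar> \<le> b0 * \<bar>(y + v (u y t) * t) - (x + v (u x t) * t)\<bar>) (at x within {0..1})"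
    proof (rule ev_within)
      fix y :: real assume y: "y \<in> {0..1}"
      have "\<bar>W y t - W x t\<bar> = \<bar>W (min (y + v (u y t) * t) 1) 0 - W (min (x + v (u x t) * t) 1) 0\<bar>"
        using W_formula[OF y t] W_formula[OF x t] by simp
      also have "\<dots> \<le> b0 * \<bar>min (y + v (u y t) * t) 1 - min (x + v (u x t) * t) 1\<bar>"
        by (rule W0_lip) (use Y_ge[OF x t] Y_ge[OF y t] in auto)
      also have "\<dots> \<le> b0 * \<bar>(y + v (u y t) * t) - (x + v (u x t) * t)\<bar>"
        by (rule mult_left_mono[OF _ b0_nn]) linarith
      finally show "\<bar>W y t - W x t\<bar> \<le> b0 * \<bar>(y + v (u y t) * t) - (x + v (u x t) * t)\<bar>" .
    qed
  qed
  moreover have "\<bar>e\<bar> \<le> 2 + M"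
  proof -
    define r where "r = deriv v (u x t) * px u x t / v (u x t)"
    have r: "-M < r" "r < 1" using feas[OF x t] unfolding r_def by auto
    have tv: "0 \<le> t * v (u x t)" "t * v (u x t) \<le> 1" using False x t v_pos[of "u x t"] by (auto simp: mult.commute)
    have "e = 1 + (t * v (u x t)) * r" unfolding e_def r_def by (simp add: field_simps)
    moreover have "\<bar>(t * v (u x t)) * r\<bar> \<le> 1 * \<bar>r\<bar>" unfolding abs_mult
      by (rule mult_right_mono) (use tv in auto)
    moreover have "\<bar>r\<bar> < 1 + M" using r M_pos by (auto simp: abs_less_iff)
    moreover have "\<bar>1 + (t * v (u x t)) * r\<bar> \<le> 1 + \<bar>(t * v (u x t)) * r\<bar>"
      using abs_triangle_ineq[of 1 "(t * v (u x t)) * r"] by simp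
    ultimately show ?thesis by linarith
  qed
  moreover have "b0 * \<bar>e\<bar> \<le> b0 * (2 + M)" by (rule mult_left_mono[OF _ b0_nn]) fact
  ultimately show ?thesis by (simp add: mult.commute)
qed


lemma Om_eq: "t \<ge> 0 \<Longrightarrow> Omega_w \<kappa> X u p t = norm (X t) + (SUP x\<in>{0..1}. \<bar>W x t\<bar>) + (SUP x\<in>{0..1}. \<bar>dW x t\<bar>)"
  unfolding Omega_w_def W_def using pxW by (auto intro!: SUP_cong)

lemma p0: "t \<ge> 0 \<Longrightarrow> p 0 t = X t"
  using p_char[of 0 t] by simp

lemma X_cont: "continuous_on {0..} X"
  using X_der continuous_on_eq_continuous_within has_vector_derivative_continuous by (metis atLeast_iff)

lemma k_cont: "continuous_on UNIV \<kappa>"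
  using Dk_der has_derivative_continuous continuous_at_imp_continuous_on by blast

lemma omega_cont: "continuous_on {0..} (\<lambda>s. W 0 s)"
proof -
  have "continuous_on {0..} (\<lambda>s. u 0 s)"
  proof -
    have "continuous_on {0..} (\<lambda>s::real. (0::real, s))" by (intro continuous_on_Pair continuous_on_id continuous_on_const)
    moreover have "(\<lambda>s::real. (0::real, s)) ` {0..} \<subseteq> {0..1} \<times> {0..}" by auto
    ultimately show ?thesis using continuous_on_compose2[OF u_cont] by fastforce
  qed
  moreover have "continuous_on {0..} (\<lambda>s. \<kappa> (X s))" using continuous_on_compose2[OF k_cont X_cont] by simp
  ultimately have "continuous_on {0..} (\<lambda>s. u 0 s - \<kappa> (X s))" by (rule continuous_on_diff)
  then show ?thesis by (rule continuous_on_cong[THEN iffD1, rotated 2]) (auto simp: W_def wfun_def p0)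
qed

lemma Omega_bound:
  assumes b: "class_KL \<beta>" and g: "class_K \<gamma>"
    and iss: "\<forall>(Xs :: real \<Rightarrow> real^'n) (\<omega> :: real \<Rightarrow> real). continuous_on {0..} \<omega> \<longrightarrow>
        (\<forall>t\<ge>0. (Xs has_vector_derivative f (Xs t) (\<kappa> (Xs t) + \<omega> t)) (at t within {0..})) \<longrightarrow>
        (\<forall>t\<ge>0. norm (Xs t) \<le> \<beta> (norm (Xs 0)) t + \<gamma> (SUP s\<in>{0..t}. \<bar>\<omega> s\<bar>))"
    and t: "t \<ge> 0"
  shows "Omega_w \<kappa> X u p t \<le> \<beta> (\<beta> (Omega_w \<kappa> X u p 0) 0 + \<gamma> (Omega_w \<kappa> X u p 0)) (max (t - 2 / vl) 0)
      + (\<beta> (Omega_w \<kappa> X u p 0) 0 + \<gamma> (Omega_w \<kappa> X u p 0) + (3 + M) * (Omega_w \<kappa> X u p 0)) * exp (2 / vl - t)"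
proof -
  define r where "r = Omega_w \<kappa> X u p 0"
  define T where "T = 2 / vl"
  have T: "T > 0" unfolding T_def using vl_pos by simp
  have r: "r = norm (X 0) + a0 + b0" unfolding r_def using Om_eq[of 0] unfolding a0_def b0_def by simp
  have rX: "norm (X 0) \<le> r" and ra: "a0 \<le> r" and rb: "b0 \<le> r" and r0: "0 \<le> r"
    using r a0_nn b0_nn by auto
  define B2 where "B2 = \<beta> r 0 + \<gamma> r"
  have b0K: "class_K (\<lambda>s. \<beta> s 0)" using KL_K[OF b] by simp
  have B2nn: "B2 \<ge> 0" unfolding B2_def using classK_nonneg[OF b0K r0] classK_nonneg[OF g r0] by simp
  have SW: "(SUP x\<in>{0..1}. \<bar>W x t\<bar>) \<le> a0"
    by (rule cSUP_least) (use W_le_a0 t in auto)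
  have SdW: "(SUP x\<in>{0..1}. \<bar>dW x t\<bar>) \<le> (2 + M) * b0"
    by (rule cSUP_least) (use dW_bound t in auto)
  have Xd: "(X has_vector_derivative f (X s) (\<kappa> (X s) + W 0 s)) (at s within {0..})" if "s \<ge> 0" for s
  proof -
    have "u 0 s = \<kappa> (X s) + W 0 s" unfolding W_def wfun_def using p0[OF that] by simp
    then show ?thesis using X_der[OF that] by simp
  qed
  have XB1: "norm (X s) \<le> \<beta> (norm (X 0)) s + \<gamma> a0" if s: "s \<ge> 0" for s
  proof -
    have "norm (X s) \<le> \<beta> (norm (X 0)) s + \<gamma> (SUP s\<in>{0..s}. \<bar>W 0 s\<bar>)"
      using iss omega_cont Xd s by blast
    moreover have "\<gamma> (SUP s\<in>{0..s}. \<bar>W 0 s\<bar>) \<le> \<gamma> a0"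
    proof (rule classK_mono[OF g])
      have bd: "bdd_above ((\<lambda>s. \<bar>W 0 s\<bar>) ` {0..s})" by (rule bdd_aboveI2[of _ _ a0]) (use W_le_a0 in auto)
      show "0 \<le> (SUP s\<in>{0..s}. \<bar>W 0 s\<bar>)"
        using cSUP_upper[OF _ bd, of 0] s by (meson abs_ge_zero atLeastAtMost_iff order.trans order_refl)
      show "(SUP s\<in>{0..s}. \<bar>W 0 s\<bar>) \<le> a0" by (rule cSUP_least) (use W_le_a0 s in auto)
    qed
    ultimately show ?thesis by simp
  qed
  have main: "Omega_w \<kappa> X u p t \<le> \<beta> B2 (max (t - T) 0) + (\<beta> r 0 + \<gamma> r + (3 + M) * r) * exp (T - t)"
  proof (cases "t < T")
    case True
    have "Omega_w \<kappa> X u p t \<le> \<beta> (norm (X 0)) t + \<gamma> a0 + a0 + (2 + M) * b0"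
      using Om_eq[OF t] SW SdW XB1[OF t] by simp
    also have "\<dots> \<le> \<beta> r 0 + \<gamma> r + (3 + M) * r"
    proof -
      have "\<beta> (norm (X 0)) t \<le> \<beta> (norm (X 0)) 0" by (rule KL_dec[OF b]) (use t in auto)
      also have "\<dots> \<le> \<beta> r 0" by (rule classK_mono[OF b0K]) (use rX in auto)
      finally have 1: "\<beta> (norm (X 0)) t \<le> \<beta> r 0" .
      have 2: "\<gamma> a0 \<le> \<gamma> r" by (rule classK_mono[OF g a0_nn ra])
      have 3: "(2 + M) * b0 \<le> (2 + M) * r" using rb M_pos by (simp add: mult_left_mono)
      show ?thesis using 1 2 3 ra by (simp add: algebra_simps)
    qed
    also have "\<dots> \<le> (\<beta> r 0 + \<gamma> r + (3 + M) * r) * exp (T - t)"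
    proof -
      have "\<beta> r 0 + \<gamma> r + (3 + M) * r \<ge> 0" using B2nn r0 M_pos unfolding B2_def by simp
      moreover have "exp (T - t) \<ge> 1" using True by simp
      ultimately show ?thesis by (metis mult_left_mono mult.right_neutral)
    qed
    also have "\<dots> \<le> \<beta> B2 (max (t - T) 0) + (\<beta> r 0 + \<gamma> r + (3 + M) * r) * exp (T - t)"
      using KL_nonneg[OF b B2nn, of "max (t - T) 0"] by simp
    finally show ?thesis .
  next
    case False
    define Y where "Y s = X (s + T)" for s
    have Yd: "(Y has_vector_derivative f (Y s) (\<kappa> (Y s) + 0)) (at s within {0..})" if s: "s \<ge> 0" for s
    proof -
      have "((\<lambda>s. s + T) has_vector_derivative 1) (at s within {0..})"
        by (auto intro!: derivative_eq_intros simp: has_real_derivative_iff_has_vector_derivative[symmetric])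
      moreover have "(X has_vector_derivative f (X (s + T)) (\<kappa> (X (s + T)) + W 0 (s + T))) (at (s + T) within (\<lambda>s. s + T) ` {0..})"
        by (rule has_vector_derivative_within_subset[OF Xd]) (use s T in auto)
      ultimately have "(Y has_vector_derivative f (X (s + T)) (\<kappa> (X (s + T)) + W 0 (s + T))) (at s within {0..})"
        using vector_diff_chain_within unfolding Y_def o_def by fastforce
      moreover have "W 0 (s + T) = 0" by (rule W_zero) (use s T_def in auto)
      ultimately show ?thesis unfolding Y_def by simp
    qed
    have "continuous_on {0..} (\<lambda>s::real. 0::real)" by simp
    then have YB: "norm (Y s) \<le> \<beta> (norm (Y 0)) s + \<gamma> (SUP s\<in>{0..s}. \<bar>0::real\<bar>)" if "s \<ge> 0" for s
      using iss Yd that by blast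
    have g0: "\<gamma> 0 = 0" using g unfolding class_K_def by simp
    have Xt: "norm (X t) \<le> \<beta> (norm (X T)) (t - T)"
      using YB[of "t - T"] False g0 unfolding Y_def by simp
    have XT: "norm (X T) \<le> B2"
    proof -
      have "norm (X T) \<le> \<beta> (norm (X 0)) T + \<gamma> a0" using XB1 T by simp
      also have "\<beta> (norm (X 0)) T \<le> \<beta> (norm (X 0)) 0" by (rule KL_dec[OF b]) (use T in auto)
      also have "\<dots> \<le> \<beta> r 0" by (rule classK_mono[OF b0K]) (use rX in auto)
      also have "\<gamma> a0 \<le> \<gamma> r" by (rule classK_mono[OF g a0_nn ra])
      finally show ?thesis unfolding B2_def by simp
    qed
    have "\<beta> (norm (X T)) (t - T) \<le> \<beta> B2 (t - T)"
      by (rule classK_mono[OF KL_K[OF b]]) (use False XT in auto)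
    moreover have SW0: "(SUP x\<in>{0..1}. \<bar>W x t\<bar>) \<le> 0"
      by (rule cSUP_least) (use W_zero False T_def in auto)
    moreover have SdW0: "(SUP x\<in>{0..1}. \<bar>dW x t\<bar>) \<le> 0"
    proof (rule cSUP_least)
      fix x :: real assume x: "x \<in> {0..1}"
      have "vl * t \<le> v (u x t) * t" using vl_le t by (simp add: mult_right_mono)
      moreover have "vl * t \<ge> 2"
      proof -
        have "2 / vl \<le> t" using False unfolding T_def by simp
        then show ?thesis using vl_pos by (simp add: divide_le_eq mult.commute)
      qed
      ultimately have "1 < x + v (u x t) * t" using x by auto
      then show "\<bar>dW x t\<bar> \<le> 0" using dW_zero[OF x t] by simp
    qed simp
    moreover have "(\<beta> r 0 + \<gamma> r + (3 + M) * r) * exp (T - t) \<ge> 0"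
      using B2nn r0 M_pos unfolding B2_def by simp
    ultimately show ?thesis using Om_eq[OF t] Xt False by simp
  qed
  then show ?thesis unfolding r_def T_def B2_def .
qed

end

theorem lemma2:
  fixes f :: "real^'n \<Rightarrow> real \<Rightarrow> real^'n" and v :: "real \<Rightarrow> real"
    and \<kappa> :: "real^'n \<Rightarrow> real" and M :: real
  assumes f_C1: "C1_fun2 f" and f00: "f 0 0 = 0"
    and A1_C2: "C2_real v" and A1_pos: "\<exists>vl>0. \<forall>s. vl \<le> v s"
    and A2: "\<exists>(R :: real^'n \<Rightarrow> real) (DR :: (real^'n) \<Rightarrow> ((real^'n) \<Rightarrow>\<^sub>L real)) \<alpha>1 \<alpha>2 \<alpha>3.
               continuous_on UNIV DR \<and> (\<forall>X. (R has_derivative blinfun_apply (DR X)) (at X)) \<and>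
               (\<forall>X. 0 \<le> R X) \<and>
               class_Kinf \<alpha>1 \<and> class_Kinf \<alpha>2 \<and> class_Kinf \<alpha>3 \<and>
               (\<forall>X. \<alpha>1 (norm X) \<le> R X \<and> R X \<le> \<alpha>2 (norm X)) \<and>
               (\<forall>X \<omega>. blinfun_apply (DR X) (f X \<omega>) \<le> R X + \<alpha>3 \<bar>\<omega>\<bar>)"
    and A3_C2: "C2_fun \<kappa>" and A3_0: "\<kappa> 0 = 0"
    and A3_ISS: "ISS (\<lambda>X \<omega>. f X (\<kappa> X + \<omega>))"
    and M_pos: "M > 0"
  shows "\<exists>\<beta>w. class_KL \<beta>w \<and>
           (\<forall>X u p. closed_loop_sol f v \<kappa> X u p \<and> feasible M v u \<longrightarrow>
              (\<forall>t\<ge>0. Omega_w \<kappa> X u p t \<le> \<beta>w (Omega_w \<kappa> X u p 0) t))"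
proof -
  obtain vl where vl: "vl > 0" "\<And>s. vl \<le> v s" using A1_pos by blast
  obtain Df where Df: "continuous_on UNIV Df" "\<And>z. ((\<lambda>(a,b). f a b) has_derivative blinfun_apply (Df z)) (at z)"
    using f_C1 unfolding C1_fun2_def by blast
  obtain Dk D2 where Dk: "\<And>z. (\<kappa> has_derivative blinfun_apply (Dk z)) (at z)"
      "\<And>z. (Dk has_derivative blinfun_apply (D2 z)) (at z)"
    using A3_C2 unfolding C2_fun_def by blast
  have Dkc: "continuous_on UNIV Dk"
    using Dk(2) has_derivative_continuous continuous_at_imp_continuous_on by blast
  have vder: "\<And>s. (v has_real_derivative deriv v s) (at s)"
    using A1_C2 unfolding C2_real_def by (simp add: DERIV_deriv_iff_real_differentiable)
  have v'c: "continuous_on UNIV (deriv v)"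
    using A1_C2 unfolding C2_real_def
    by (meson continuous_at_imp_continuous_on differentiable_imp_continuous_within)
  obtain \<beta> \<gamma> where bg: "class_KL \<beta>" "class_K \<gamma>" and iss:
    "\<forall>(Xs :: real \<Rightarrow> real^'n) (\<omega> :: real \<Rightarrow> real). continuous_on {0..} \<omega> \<longrightarrow>
        (\<forall>t\<ge>0. (Xs has_vector_derivative f (Xs t) (\<kappa> (Xs t) + \<omega> t)) (at t within {0..})) \<longrightarrow>
        (\<forall>t\<ge>0. norm (Xs t) \<le> \<beta> (norm (Xs 0)) t + \<gamma> (SUP s\<in>{0..t}. \<bar>\<omega> s\<bar>))"
    using A3_ISS unfolding ISS_def by blast
  define \<beta>w where "\<beta>w = (\<lambda>r t. \<beta> (\<beta> r 0 + \<gamma> r) (max (t - 2 / vl) 0) + (\<beta> r 0 + \<gamma> r + (3 + M) * r) * exp (2 / vl - t))"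
  show ?thesis
  proof (intro exI[of _ \<beta>w] conjI allI impI)
    show "class_KL \<beta>w" unfolding \<beta>w_def by (rule KL_construct[OF bg]) (use vl M_pos in auto)
    fix X u p and t :: real
    assume H: "closed_loop_sol f v \<kappa> X u p \<and> feasible M v u" and t: "0 \<le> t"
    obtain Du where Du: "continuous_on ({0..1} \<times> {0..}) Du"
      "\<And>z. z \<in> {0..1} \<times> {0..} \<Longrightarrow> ((\<lambda>(x,t). u x t) has_derivative blinfun_apply (Du z)) (at z within {0..1} \<times> {0..})"
      using H unfolding closed_loop_sol_def C1_on2_def by blast
    interpret sol f v \<kappa> X u p M vl Df Dk Du
    proof
      show "\<And>t. t \<ge> 0 \<Longrightarrow> (X has_vector_derivative f (X t) (u 0 t)) (at t within {0..})"
        using H unfolding closed_loop_sol_def by blast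
      show "\<And>x t. x \<in> {0..1} \<Longrightarrow> t \<ge> 0 \<Longrightarrow> pt u x t = v (u x t) * px u x t"
        using H unfolding closed_loop_sol_def by blast
      show "\<And>t. t \<ge> 0 \<Longrightarrow> u 1 t = \<kappa> (p 1 t)"
        using H unfolding closed_loop_sol_def by blast
      show "\<And>t. t \<ge> 0 \<Longrightarrow> continuous_on {0..1} (\<lambda>x. p x t)"
        using H unfolding closed_loop_sol_def by blast
      show "\<And>x t. x \<in> {0..1} \<Longrightarrow> t \<ge> 0 \<Longrightarrow>
        p x t = X t + integral {0..x} (\<lambda>y. Gam v (u y t) (px u y t) y *\<^sub>R f (p y t) (u y t))"
        using H unfolding closed_loop_sol_def by blast
      show "\<And>x t. x \<in> {0..1} \<Longrightarrow> t \<ge> 0 \<Longrightarrow>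
        - M < deriv v (u x t) * px u x t / v (u x t) \<and> deriv v (u x t) * px u x t / v (u x t) < 1"
        using H unfolding feasible_def by blast
    qed (use Df vder v'c vl Dkc Dk Du M_pos in auto)
    show "Omega_w \<kappa> X u p t \<le> \<beta>w (Omega_w \<kappa> X u p 0) t"
      unfolding \<beta>w_def using Omega_bound[OF bg iss t] by simp
  qed
qed

end
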